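(* Let $\mathfrak{M}=(S,\mathcal{L})$ be a Veblenian gamma space all of whose lines have at least $3$ points, and let $\mathcal{H}$ be a flappy hyperplane of $\mathfrak{M}$. Then for all pairwise distinct points $p_1,p_2,p_3\in\mathcal{H}$: $p_1,p_2,p_3$ lie on a common line of $\mathfrak{M}$ if and only if there exist points $a_1,a_2,a_3\in S\setminus\mathcal{H}$ such that for every permutation $(i,j,k)$ of $(1,2,3)$ the points $a_i,a_j$ are distinct and collinear and $p_k$ lies on the line through $a_i$ and $a_j$. Equivalently, in terms of the complement: for lines $L_1,L_2,L_3$ of $\mathfrak{M}$ not contained in $\mathcal{H}$ with pairwise distinct points $L_1^\infty,L_2^\infty,L_3^\infty$, these three points are collinear in $\mathfrak{M}$ if and only if there is a triangle in $\mathfrak{M}\setminus\mathcal{H}$ with sides $K_1,K_2,K_3$ such that $K_i\parallel_\mathcal{H} L_i$ for $i=1,2,3$.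
   Context: A partial linear space is a pair $(S,\mathcal{L})$ of points and lines such that every line has at least two points, every point is on a line, and two distinct lines share at most one point; points are collinear ($a\sim b$) if some line contains both; $[a]_\sim$ is the set of points collinear with $a$. A subspace is a set $X$ such that every line meeting $X$ in at least two points lies in $X$; a hyperplane is a proper subspace meeting every line. A gamma space is a partial linear space where $[a]_\sim$ is a subspace for every point $a$. It is Veblenian if for any two distinct lines $L_1,L_2$ through a point $p$ and any two distinct lines $K_1,K_2$ not through $p$ such that each $K_j$ meets both $L_1,L_2$, the lines $K_1,K_2$ meet. A hyperplane $X$ is flappy if for every line $L\subseteq X$ there is a point $a\notin X$ with $L\subseteq[a]_\sim$. A triangle is a triple of pairwise distinct, pairwise collinear points not on a common line. For a hyperplane $\mathcal{H}$, each line $L\not\subseteq\mathcal{H}$ meets $\mathcal{H}$ in a unique point $L^\infty$; the complement $\mathfrak{M}\setminus\mathcal{H}$ has points $S\setminus\mathcal{H}$, lines $L\setminus\mathcal{H}$ ($L\not\subseteq\mathcal{H}$), and parallelism $L\parallel_\mathcal{H}K$ iff $L^\infty=K^\infty$. *)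

theory Defs
  imports Main
begin

definition partial_linear_space :: "'a set \<Rightarrow> 'a set set \<Rightarrow> bool" where
  "partial_linear_space S Ls \<longleftrightarrow>
     (\<forall>L\<in>Ls. L \<subseteq> S \<and> (\<exists>x y. x \<in> L \<and> y \<in> L \<and> x \<noteq> y)) \<and>
     (\<forall>a\<in>S. \<exists>L\<in>Ls. a \<in> L) \<and>
     (\<forall>L\<in>Ls. \<forall>K\<in>Ls. L \<noteq> K \<longrightarrow> (\<forall>x y. x \<in> L \<inter> K \<and> y \<in> L \<inter> K \<longrightarrow> x = y))"

definition collinear :: "'a set set \<Rightarrow> 'a \<Rightarrow> 'a \<Rightarrow> bool" where
  "collinear Ls a b \<longleftrightarrow> (\<exists>L\<in>Ls. a \<in> L \<and> b \<in> L)"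

definition coll_class :: "'a set \<Rightarrow> 'a set set \<Rightarrow> 'a \<Rightarrow> 'a set" where
  "coll_class S Ls a = {b \<in> S. collinear Ls a b}"

definition subspace :: "'a set \<Rightarrow> 'a set set \<Rightarrow> 'a set \<Rightarrow> bool" where
  "subspace S Ls X \<longleftrightarrow> X \<subseteq> S \<and>
     (\<forall>L\<in>Ls. (\<exists>x y. x \<in> L \<inter> X \<and> y \<in> L \<inter> X \<and> x \<noteq> y) \<longrightarrow> L \<subseteq> X)"

definition hyperplane :: "'a set \<Rightarrow> 'a set set \<Rightarrow> 'a set \<Rightarrow> bool" where
  "hyperplane S Ls X \<longleftrightarrow> subspace S Ls X \<and> X \<noteq> S \<and> (\<forall>L\<in>Ls. L \<inter> X \<noteq> {})"

definition gamma_space :: "'a set \<Rightarrow> 'a set set \<Rightarrow> bool" where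
  "gamma_space S Ls \<longleftrightarrow> partial_linear_space S Ls \<and>
     (\<forall>a\<in>S. subspace S Ls (coll_class S Ls a))"

definition veblenian :: "'a set \<Rightarrow> 'a set set \<Rightarrow> bool" where
  "veblenian S Ls \<longleftrightarrow>
     (\<forall>p L1 L2 K1 K2. L1 \<in> Ls \<and> L2 \<in> Ls \<and> L1 \<noteq> L2 \<and> p \<in> L1 \<and> p \<in> L2 \<and>
        K1 \<in> Ls \<and> K2 \<in> Ls \<and> K1 \<noteq> K2 \<and> p \<notin> K1 \<and> p \<notin> K2 \<and>
        K1 \<inter> L1 \<noteq> {} \<and> K1 \<inter> L2 \<noteq> {} \<and> K2 \<inter> L1 \<noteq> {} \<and> K2 \<inter> L2 \<noteq> {}
        \<longrightarrow> K1 \<inter> K2 \<noteq> {})"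

definition flappy :: "'a set \<Rightarrow> 'a set set \<Rightarrow> 'a set \<Rightarrow> bool" where
  "flappy S Ls X \<longleftrightarrow> hyperplane S Ls X \<and>
     (\<forall>L\<in>Ls. L \<subseteq> X \<longrightarrow> (\<exists>a\<in>S - X. L \<subseteq> coll_class S Ls a))"

definition triangle :: "'a set set \<Rightarrow> 'a \<Rightarrow> 'a \<Rightarrow> 'a \<Rightarrow> bool" where
  "triangle Ls a b c \<longleftrightarrow> a \<noteq> b \<and> b \<noteq> c \<and> a \<noteq> c \<and>
     collinear Ls a b \<and> collinear Ls b c \<and> collinear Ls a c \<and>
     \<not> (\<exists>L\<in>Ls. a \<in> L \<and> b \<in> L \<and> c \<in> L)"

text \<open>Complement of a hyperplane H: points S - H, lines L - H for lines L not inside H.\<close>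
definition compl_lines :: "'a set set \<Rightarrow> 'a set \<Rightarrow> 'a set set" where
  "compl_lines Ls H = {L - H | L. L \<in> Ls \<and> \<not> L \<subseteq> H}"

definition inf_pt :: "'a set \<Rightarrow> 'a set \<Rightarrow> 'a" where
  "inf_pt H L = (THE p. p \<in> L \<inter> H)"

text \<open>Parallelism in the complement, phrased via the lines of M: L \<parallel> K iff L^\<infinity> = K^\<infinity>.\<close>
definition hpar :: "'a set \<Rightarrow> 'a set \<Rightarrow> 'a set \<Rightarrow> bool" where
  "hpar H K L \<longleftrightarrow> inf_pt H K = inf_pt H L"

end

theory Submission
  imports Defs
begin

lemma uniq:
  assumes "partial_linear_space S Ls" "L\<in>Ls" "K\<in>Ls" "x\<in>L" "y\<in>L" "x\<in>K" "y\<in>K" "x\<noteq>y"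
  shows "L = K"
  using assms unfolding partial_linear_space_def by blast

lemma hsub:
  assumes "hyperplane S Ls H" "L\<in>Ls" "x\<in>L" "y\<in>L" "x\<in>H" "y\<in>H" "x\<noteq>y"
  shows "L \<subseteq> H"
  using assms unfolding hyperplane_def subspace_def by blast

lemma pls_sub: "partial_linear_space S Ls \<Longrightarrow> L \<in> Ls \<Longrightarrow> L \<subseteq> S"
  unfolding partial_linear_space_def by simp

lemma gam:
  assumes "gamma_space S Ls" "a\<in>S" "L\<in>Ls" "x\<in>L" "y\<in>L" "x\<noteq>y"
    "collinear Ls a x" "collinear Ls a y" "z\<in>L"
  shows "collinear Ls a z"
proof -
  have pls: "partial_linear_space S Ls" using assms(1) unfolding gamma_space_def by simp
  have ls: "L \<subseteq> S" using pls_sub[OF pls assms(3)] .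
  have sub: "subspace S Ls (coll_class S Ls a)" using assms(1,2) unfolding gamma_space_def by simp
  have xy: "x \<in> L \<inter> coll_class S Ls a" "y \<in> L \<inter> coll_class S Ls a"
    using assms ls unfolding coll_class_def by auto
  have "\<forall>L\<in>Ls. (\<exists>x y. x \<in> L \<inter> coll_class S Ls a \<and> y \<in> L \<inter> coll_class S Ls a \<and> x \<noteq> y) \<longrightarrow> L \<subseteq> coll_class S Ls a"
    using sub unfolding subspace_def by simp
  then have "L \<subseteq> coll_class S Ls a"
    using xy assms(3,6) by blast
  then show ?thesis using assms(9) unfolding coll_class_def by blast
qed

lemma collsym: "collinear Ls a b \<Longrightarrow> collinear Ls b a"
  unfolding collinear_def by blast

lemma vebr:
  assumes "veblenian S Ls" "L1\<in>Ls" "L2\<in>Ls" "L1\<noteq>L2" "p\<in>L1" "p\<in>L2"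
    "K1\<in>Ls" "K2\<in>Ls" "K1\<noteq>K2" "p\<notin>K1" "p\<notin>K2"
    "x1\<in>K1" "x1\<in>L1" "x2\<in>K1" "x2\<in>L2" "y1\<in>K2" "y1\<in>L1" "y2\<in>K2" "y2\<in>L2"
  shows "\<exists>z. z\<in>K1 \<and> z\<in>K2"
proof -
  have i: "K1 \<inter> L1 \<noteq> {}" "K1 \<inter> L2 \<noteq> {}" "K2 \<inter> L1 \<noteq> {}" "K2 \<inter> L2 \<noteq> {}"
    using assms(12-19) by blast+
  have imp: "L1 \<in> Ls \<and> L2 \<in> Ls \<and> L1 \<noteq> L2 \<and> p \<in> L1 \<and> p \<in> L2 \<and>
        K1 \<in> Ls \<and> K2 \<in> Ls \<and> K1 \<noteq> K2 \<and> p \<notin> K1 \<and> p \<notin> K2 \<and>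
        K1 \<inter> L1 \<noteq> {} \<and> K1 \<inter> L2 \<noteq> {} \<and> K2 \<inter> L1 \<noteq> {} \<and> K2 \<inter> L2 \<noteq> {}
        \<longrightarrow> K1 \<inter> K2 \<noteq> {}"
    using spec[OF spec[OF spec[OF spec[OF spec[OF assms(1)[unfolded veblenian_def], of p], of L1], of L2], of K1], of K2] .
  have "K1 \<inter> K2 \<noteq> {}" using imp assms(2-11) i by simp
  then show ?thesis by blast
qed

lemma bwd:
  assumes gamma: "gamma_space S Ls" and veb: "veblenian S Ls" and hyp: "hyperplane S Ls H"
    and p: "p1\<in>H" "p2\<in>H" "p3\<in>H" "p1\<noteq>p2" "p2\<noteq>p3" "p1\<noteq>p3"
    and a: "a1\<in>S-H" "a2\<in>S-H" "a3\<in>S-H" "a1\<noteq>a2" "a2\<noteq>a3" "a1\<noteq>a3"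
    and N1: "N1\<in>Ls" "a2\<in>N1" "a3\<in>N1" "p1\<in>N1"
    and N2: "N2\<in>Ls" "a1\<in>N2" "a3\<in>N2" "p2\<in>N2"
    and N3: "N3\<in>Ls" "a1\<in>N3" "a2\<in>N3" "p3\<in>N3"
  shows "\<exists>L\<in>Ls. p1\<in>L \<and> p2\<in>L \<and> p3\<in>L"
proof -
  have pls: "partial_linear_space S Ls" using gamma unfolding gamma_space_def by blast
  have HS: "H \<subseteq> S" using hyp unfolding hyperplane_def subspace_def by blast
  have N12: "N1 \<noteq> N2"
  proof
    assume "N1 = N2"
    then have "N1 \<subseteq> H" using hsub[OF hyp N1(1) N1(4), of p2] N2 p by blast
    then show False using N1 a by blast
  qed
  have a3N3: "a3 \<notin> N3"
  proof
    assume "a3 \<in> N3"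
    then have "N3 = N2" using uniq[OF pls N3(1) N2(1), of a1 a3] N3 N2 a by blast
    then have "N3 \<subseteq> H" using hsub[OF hyp N3(1) N3(4), of p2] N2 p by blast
    then show False using N3 a by blast
  qed
  have c1: "collinear Ls a1 p1"
    using gam[OF gamma _ N1(1) N1(2) N1(3) a(5), of a1 p1] a N1 N2 N3
    unfolding collinear_def by blast
  have p1S: "p1 \<in> S" using HS p by blast
  have "collinear Ls p1 a3" "collinear Ls p1 a1" using N1 c1 collsym unfolding collinear_def by blast+
  then have "collinear Ls p1 p2"
    using gam[OF gamma p1S N2(1) N2(2) N2(3) a(6)] N2 by blast
  then obtain L where L: "L\<in>Ls" "p1\<in>L" "p2\<in>L" unfolding collinear_def by blast
  have LH: "L \<subseteq> H" using hsub[OF hyp L(1) L(2) L(3)] p by blast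
  have a3L: "a3 \<notin> L" using LH a by blast
  have LN3: "L \<noteq> N3" using LH N3 a by blast
  obtain z where z: "z\<in>L" "z\<in>N3"
    using vebr[OF veb N1(1) N2(1) N12 N1(3) N2(3) L(1) N3(1) LN3 a3L a3N3 L(2) N1(4) L(3) N2(4)
        N3(3) N1(2) N3(2) N2(2)] by blast
  have "z = p3"
  proof (rule ccontr)
    assume "z \<noteq> p3"
    then have "N3 \<subseteq> H" using hsub[OF hyp N3(1) z(2) N3(4)] z LH p by blast
    then show False using N3 a by blast
  qed
  then show ?thesis using L z by blast
qed

lemma fwd:
  assumes gamma: "gamma_space S Ls" and veb: "veblenian S Ls"
    and thick: "\<forall>L\<in>Ls. \<exists>x y z. x \<in> L \<and> y \<in> L \<and> z \<in> L \<and> x \<noteq> y \<and> y \<noteq> z \<and> x \<noteq> z"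
    and flap: "flappy S Ls H"
    and p: "p1\<in>H" "p2\<in>H" "p3\<in>H" "p1\<noteq>p2" "p2\<noteq>p3" "p1\<noteq>p3"
    and L: "L\<in>Ls" "p1\<in>L" "p2\<in>L" "p3\<in>L"
  shows "\<exists>a1 a2 a3. a1 \<in> S - H \<and> a2 \<in> S - H \<and> a3 \<in> S - H \<and>
            a1 \<noteq> a2 \<and> a2 \<noteq> a3 \<and> a1 \<noteq> a3 \<and>
            (\<exists>L\<in>Ls. a2 \<in> L \<and> a3 \<in> L \<and> p1 \<in> L) \<and>
            (\<exists>L\<in>Ls. a1 \<in> L \<and> a3 \<in> L \<and> p2 \<in> L) \<and>
            (\<exists>L\<in>Ls. a1 \<in> L \<and> a2 \<in> L \<and> p3 \<in> L)"
proof -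
  have pls: "partial_linear_space S Ls" using gamma unfolding gamma_space_def by simp
  have hyp: "hyperplane S Ls H" using flap unfolding flappy_def by simp
  have HS: "H \<subseteq> S" using hyp unfolding hyperplane_def subspace_def by simp
  have LH: "L \<subseteq> H" using hsub[OF hyp L(1) L(2) L(3)] p by blast
  have "\<forall>L\<in>Ls. L \<subseteq> H \<longrightarrow> (\<exists>a\<in>S - H. L \<subseteq> coll_class S Ls a)"
    using flap unfolding flappy_def by simp
  then obtain a where a: "a \<in> S - H" "L \<subseteq> coll_class S Ls a" using L(1) LH by blast
  have ca: "\<And>x. x \<in> L \<Longrightarrow> collinear Ls a x" using a(2) unfolding coll_class_def by blast
  obtain M1 where M1: "M1 \<in> Ls" "a \<in> M1" "p1 \<in> M1" using ca[OF L(2)] unfolding collinear_def by blast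
  obtain M2 where M2: "M2 \<in> Ls" "a \<in> M2" "p2 \<in> M2" using ca[OF L(3)] unfolding collinear_def by blast
  have M1H: "\<And>x. x \<in> M1 \<Longrightarrow> x \<in> H \<Longrightarrow> x = p1"
  proof (rule ccontr)
    fix x assume "x \<in> M1" "x \<in> H" "x \<noteq> p1"
    then have "M1 \<subseteq> H" using hsub[OF hyp M1(1) \<open>x \<in> M1\<close> M1(3)] p by blast
    then show False using M1 a by blast
  qed
  have M2H: "\<And>x. x \<in> M2 \<Longrightarrow> x \<in> H \<Longrightarrow> x = p2"
  proof (rule ccontr)
    fix x assume "x \<in> M2" "x \<in> H" "x \<noteq> p2"
    then have "M2 \<subseteq> H" using hsub[OF hyp M2(1) \<open>x \<in> M2\<close> M2(3)] p by blast
    then show False using M2 a by blast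
  qed
  obtain a1 where a1: "a1 \<in> M2" "a1 \<noteq> a" "a1 \<noteq> p2"
  proof -
    obtain x y z where "x \<in> M2" "y \<in> M2" "z \<in> M2" "x \<noteq> y" "y \<noteq> z" "x \<noteq> z"
      using thick M2(1) by blast
    then show ?thesis using that by metis
  qed
  have a1H: "a1 \<notin> H" using M2H a1 by blast
  have a1S: "a1 \<in> S" using pls_sub[OF pls M2(1)] a1 by blast
  have p3S: "p3 \<in> S" using HS p by blast
  have "collinear Ls p3 a" using collsym[OF ca[OF L(4)]] .
  moreover have "collinear Ls p3 p2" using L unfolding collinear_def by blast
  moreover have "a \<noteq> p2" using a p by blast
  ultimately have "collinear Ls p3 a1"
    using gam[OF gamma p3S M2(1) M2(2) M2(3) _ _ _ a1(1)] by simp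
  then obtain N where N: "N \<in> Ls" "p3 \<in> N" "a1 \<in> N" unfolding collinear_def by blast
  have NH: "\<And>x. x \<in> N \<Longrightarrow> x \<in> H \<Longrightarrow> x = p3"
  proof (rule ccontr)
    fix x assume "x \<in> N" "x \<in> H" "x \<noteq> p3"
    then have "N \<subseteq> H" using hsub[OF hyp N(1) \<open>x \<in> N\<close> N(2)] p by blast
    then show False using N a1H by blast
  qed
  have LM2: "L \<noteq> M2" using LH M2 a by blast
  have NM1: "N \<noteq> M1" using M1H N p by blast
  have p2N: "p2 \<notin> N" using NH p by blast
  have p2M1: "p2 \<notin> M1" using M1H p by blast
  obtain a2 where a2: "a2 \<in> N" "a2 \<in> M1"
    using vebr[OF veb L(1) M2(1) LM2 L(3) M2(3) N(1) M1(1) NM1 p2N p2M1 N(2) L(4) N(3) a1(1)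
        M1(3) L(2) M1(2) M2(2)] by blast
  have a2H: "a2 \<notin> H"
  proof
    assume "a2 \<in> H"
    then have "a2 = p3" "a2 = p1" using NH M1H a2 by auto
    then show False using p by simp
  qed
  have a2S: "a2 \<in> S" using pls_sub[OF pls N(1)] a2 by blast
  have a2a: "a2 \<noteq> a"
  proof
    assume "a2 = a"
    then have "N = M2" using uniq[OF pls N(1) M2(1), of a a1] a2 a1 M2 N by blast
    then show False using M2H N p by blast
  qed
  have a12: "a1 \<noteq> a2"
  proof
    assume "a1 = a2"
    then have "M1 = M2" using uniq[OF pls M1(1) M2(1), of a a1] a2 a1 M2 M1 by blast
    then show False using M2H M1 p by blast
  qed
  have e1: "\<exists>L\<in>Ls. a2 \<in> L \<and> a \<in> L \<and> p1 \<in> L" using M1 a2 by blast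
  have e2: "\<exists>L\<in>Ls. a1 \<in> L \<and> a \<in> L \<and> p2 \<in> L" using M2 a1 by blast
  have e3: "\<exists>L\<in>Ls. a1 \<in> L \<and> a2 \<in> L \<and> p3 \<in> L" using N a2 by blast
  have d: "a1 \<in> S - H" "a2 \<in> S - H" "a \<in> S - H" "a1 \<noteq> a2" "a2 \<noteq> a" "a1 \<noteq> a"
    using a1H a1S a2H a2S a(1) a12 a2a a1(2) by auto
  show ?thesis
    by (rule exI[where x=a1], rule exI[where x=a2], rule exI[where x=a]) (intro conjI d e1 e2 e3)
qed

lemma infpt:
  assumes hyp: "hyperplane S Ls H" and L: "L \<in> Ls" and nL: "\<not> L \<subseteq> H"
  shows "inf_pt H L \<in> L \<and> inf_pt H L \<in> H \<and> (\<forall>x. x \<in> L \<and> x \<in> H \<longrightarrow> x = inf_pt H L)"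
proof -
  have "\<forall>L\<in>Ls. L \<inter> H \<noteq> {}" using hyp unfolding hyperplane_def by simp
  then have "L \<inter> H \<noteq> {}" using L by simp
  then obtain q where q: "q \<in> L" "q \<in> H" by blast
  have u: "x = q" if "x \<in> L" "x \<in> H" for x
  proof (rule ccontr)
    assume "x \<noteq> q"
    then have "L \<subseteq> H" using hsub[OF hyp L that(1) q(1) that(2) q(2)] by simp
    then show False using nL by simp
  qed
  have "inf_pt H L = q" unfolding inf_pt_def
    using q u by (intro the_equality) blast+
  then show ?thesis using q u by blast
qed

theorem proposition2p5:
  fixes S :: "'a set" and Ls :: "'a set set" and H :: "'a set"
  assumes gamma: "gamma_space S Ls"
    and veb: "veblenian S Ls"
    and thick: "\<forall>L\<in>Ls. \<exists>x y z. x \<in> L \<and> y \<in> L \<and> z \<in> L \<and> x \<noteq> y \<and> y \<noteq> z \<and> x \<noteq> z"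
    and flap: "flappy S Ls H"
  shows
    "(\<forall>p1 p2 p3. p1 \<in> H \<and> p2 \<in> H \<and> p3 \<in> H \<and> p1 \<noteq> p2 \<and> p2 \<noteq> p3 \<and> p1 \<noteq> p3 \<longrightarrow>
        ((\<exists>L\<in>Ls. p1 \<in> L \<and> p2 \<in> L \<and> p3 \<in> L) \<longleftrightarrow>
         (\<exists>a1 a2 a3. a1 \<in> S - H \<and> a2 \<in> S - H \<and> a3 \<in> S - H \<and>
            a1 \<noteq> a2 \<and> a2 \<noteq> a3 \<and> a1 \<noteq> a3 \<and>
            (\<exists>L\<in>Ls. a2 \<in> L \<and> a3 \<in> L \<and> p1 \<in> L) \<and>
            (\<exists>L\<in>Ls. a1 \<in> L \<and> a3 \<in> L \<and> p2 \<in> L) \<and>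
            (\<exists>L\<in>Ls. a1 \<in> L \<and> a2 \<in> L \<and> p3 \<in> L)))) \<and>
     (\<forall>L1 L2 L3. L1 \<in> Ls \<and> L2 \<in> Ls \<and> L3 \<in> Ls \<and>
        \<not> L1 \<subseteq> H \<and> \<not> L2 \<subseteq> H \<and> \<not> L3 \<subseteq> H \<and>
        inf_pt H L1 \<noteq> inf_pt H L2 \<and> inf_pt H L2 \<noteq> inf_pt H L3 \<and> inf_pt H L1 \<noteq> inf_pt H L3 \<longrightarrow>
        ((\<exists>L\<in>Ls. inf_pt H L1 \<in> L \<and> inf_pt H L2 \<in> L \<and> inf_pt H L3 \<in> L) \<longleftrightarrow>
         (\<exists>a1 a2 a3 K1 K2 K3.
            a1 \<in> S - H \<and> a2 \<in> S - H \<and> a3 \<in> S - H \<and>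
            triangle (compl_lines Ls H) a1 a2 a3 \<and>
            K1 \<in> Ls \<and> K2 \<in> Ls \<and> K3 \<in> Ls \<and>
            \<not> K1 \<subseteq> H \<and> \<not> K2 \<subseteq> H \<and> \<not> K3 \<subseteq> H \<and>
            a2 \<in> K1 - H \<and> a3 \<in> K1 - H \<and>
            a1 \<in> K2 - H \<and> a3 \<in> K2 - H \<and>
            a1 \<in> K3 - H \<and> a2 \<in> K3 - H \<and>
            hpar H K1 L1 \<and> hpar H K2 L2 \<and> hpar H K3 L3)))"
proof -
  have pls: "partial_linear_space S Ls" using gamma unfolding gamma_space_def by simp
  have hyp: "hyperplane S Ls H" using flap unfolding flappy_def by simp
  have HS: "H \<subseteq> S" using hyp unfolding hyperplane_def subspace_def by simp
  have P1: "((\<exists>L\<in>Ls. p1 \<in> L \<and> p2 \<in> L \<and> p3 \<in> L) \<longleftrightarrow>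
         (\<exists>a1 a2 a3. a1 \<in> S - H \<and> a2 \<in> S - H \<and> a3 \<in> S - H \<and>
            a1 \<noteq> a2 \<and> a2 \<noteq> a3 \<and> a1 \<noteq> a3 \<and>
            (\<exists>L\<in>Ls. a2 \<in> L \<and> a3 \<in> L \<and> p1 \<in> L) \<and>
            (\<exists>L\<in>Ls. a1 \<in> L \<and> a3 \<in> L \<and> p2 \<in> L) \<and>
            (\<exists>L\<in>Ls. a1 \<in> L \<and> a2 \<in> L \<and> p3 \<in> L)))"
    if p: "p1 \<in> H" "p2 \<in> H" "p3 \<in> H" "p1 \<noteq> p2" "p2 \<noteq> p3" "p1 \<noteq> p3" for p1 p2 p3
  proof
    assume "\<exists>L\<in>Ls. p1 \<in> L \<and> p2 \<in> L \<and> p3 \<in> L"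
    then obtain L where "L\<in>Ls" "p1 \<in> L" "p2 \<in> L" "p3 \<in> L" by blast
    from fwd[OF gamma veb thick flap p this] show "\<exists>a1 a2 a3. a1 \<in> S - H \<and> a2 \<in> S - H \<and> a3 \<in> S - H \<and>
            a1 \<noteq> a2 \<and> a2 \<noteq> a3 \<and> a1 \<noteq> a3 \<and>
            (\<exists>L\<in>Ls. a2 \<in> L \<and> a3 \<in> L \<and> p1 \<in> L) \<and>
            (\<exists>L\<in>Ls. a1 \<in> L \<and> a3 \<in> L \<and> p2 \<in> L) \<and>
            (\<exists>L\<in>Ls. a1 \<in> L \<and> a2 \<in> L \<and> p3 \<in> L)" .
  next
    assume "\<exists>a1 a2 a3. a1 \<in> S - H \<and> a2 \<in> S - H \<and> a3 \<in> S - H \<and>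
            a1 \<noteq> a2 \<and> a2 \<noteq> a3 \<and> a1 \<noteq> a3 \<and>
            (\<exists>L\<in>Ls. a2 \<in> L \<and> a3 \<in> L \<and> p1 \<in> L) \<and>
            (\<exists>L\<in>Ls. a1 \<in> L \<and> a3 \<in> L \<and> p2 \<in> L) \<and>
            (\<exists>L\<in>Ls. a1 \<in> L \<and> a2 \<in> L \<and> p3 \<in> L)"
    then obtain a1 a2 a3 N1 N2 N3 where a: "a1\<in>S-H" "a2\<in>S-H" "a3\<in>S-H" "a1\<noteq>a2" "a2\<noteq>a3" "a1\<noteq>a3"
      and N1: "N1\<in>Ls" "a2\<in>N1" "a3\<in>N1" "p1\<in>N1"
      and N2: "N2\<in>Ls" "a1\<in>N2" "a3\<in>N2" "p2\<in>N2"
      and N3: "N3\<in>Ls" "a1\<in>N3" "a2\<in>N3" "p3\<in>N3" by blast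
    show "\<exists>L\<in>Ls. p1 \<in> L \<and> p2 \<in> L \<and> p3 \<in> L"
      by (rule bwd[OF gamma veb hyp p a N1 N2 N3])
  qed
  have P2: "((\<exists>L\<in>Ls. inf_pt H L1 \<in> L \<and> inf_pt H L2 \<in> L \<and> inf_pt H L3 \<in> L) \<longleftrightarrow>
         (\<exists>a1 a2 a3 K1 K2 K3.
            a1 \<in> S - H \<and> a2 \<in> S - H \<and> a3 \<in> S - H \<and>
            triangle (compl_lines Ls H) a1 a2 a3 \<and>
            K1 \<in> Ls \<and> K2 \<in> Ls \<and> K3 \<in> Ls \<and>
            \<not> K1 \<subseteq> H \<and> \<not> K2 \<subseteq> H \<and> \<not> K3 \<subseteq> H \<and>
            a2 \<in> K1 - H \<and> a3 \<in> K1 - H \<and>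
            a1 \<in> K2 - H \<and> a3 \<in> K2 - H \<and>
            a1 \<in> K3 - H \<and> a2 \<in> K3 - H \<and>
            hpar H K1 L1 \<and> hpar H K2 L2 \<and> hpar H K3 L3))"
    if L: "L1 \<in> Ls" "L2 \<in> Ls" "L3 \<in> Ls" "\<not> L1 \<subseteq> H" "\<not> L2 \<subseteq> H" "\<not> L3 \<subseteq> H"
      and q: "inf_pt H L1 \<noteq> inf_pt H L2" "inf_pt H L2 \<noteq> inf_pt H L3" "inf_pt H L1 \<noteq> inf_pt H L3"
    for L1 L2 L3
  proof -
    define q1 where "q1 = inf_pt H L1"
    define q2 where "q2 = inf_pt H L2"
    define q3 where "q3 = inf_pt H L3"
    have qH: "q1 \<in> H" "q2 \<in> H" "q3 \<in> H" "q1 \<noteq> q2" "q2 \<noteq> q3" "q1 \<noteq> q3"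
      using infpt[OF hyp L(1) L(4)] infpt[OF hyp L(2) L(5)] infpt[OF hyp L(3) L(6)] q
      unfolding q1_def q2_def q3_def by auto
    have hparI: "hpar H K L" if "K \<in> Ls" "\<not> K \<subseteq> H" "inf_pt H L \<in> K" "inf_pt H L \<in> H" for K L
      using infpt[OF hyp that(1,2)] that(3,4) unfolding hpar_def by metis
    have hparD: "inf_pt H L \<in> K" if "K \<in> Ls" "\<not> K \<subseteq> H" "hpar H K L" for K L
      using infpt[OF hyp that(1,2)] that(3) unfolding hpar_def by metis
    show ?thesis unfolding q1_def[symmetric] q2_def[symmetric] q3_def[symmetric]
    proof
      assume "\<exists>L\<in>Ls. q1 \<in> L \<and> q2 \<in> L \<and> q3 \<in> L"
      then have "\<exists>a1 a2 a3. a1 \<in> S - H \<and> a2 \<in> S - H \<and> a3 \<in> S - H \<and>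
            a1 \<noteq> a2 \<and> a2 \<noteq> a3 \<and> a1 \<noteq> a3 \<and>
            (\<exists>L\<in>Ls. a2 \<in> L \<and> a3 \<in> L \<and> q1 \<in> L) \<and>
            (\<exists>L\<in>Ls. a1 \<in> L \<and> a3 \<in> L \<and> q2 \<in> L) \<and>
            (\<exists>L\<in>Ls. a1 \<in> L \<and> a2 \<in> L \<and> q3 \<in> L)" using P1[OF qH] by simp
      then obtain a1 a2 a3 N1 N2 N3 where a: "a1\<in>S-H" "a2\<in>S-H" "a3\<in>S-H" "a1\<noteq>a2" "a2\<noteq>a3" "a1\<noteq>a3"
        and N1: "N1\<in>Ls" "a2\<in>N1" "a3\<in>N1" "q1\<in>N1"
        and N2: "N2\<in>Ls" "a1\<in>N2" "a3\<in>N2" "q2\<in>N2"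
        and N3: "N3\<in>Ls" "a1\<in>N3" "a2\<in>N3" "q3\<in>N3" by blast
      have nH: "\<not> N1 \<subseteq> H" "\<not> N2 \<subseteq> H" "\<not> N3 \<subseteq> H" using a N1 N2 N3 by auto
      have inC: "N1 - H \<in> compl_lines Ls H" "N2 - H \<in> compl_lines Ls H" "N3 - H \<in> compl_lines Ls H"
        unfolding compl_lines_def using N1(1) N2(1) N3(1) nH by blast+
      have noline: "\<not> (\<exists>M\<in>compl_lines Ls H. a1 \<in> M \<and> a2 \<in> M \<and> a3 \<in> M)"
      proof
        assume "\<exists>M\<in>compl_lines Ls H. a1 \<in> M \<and> a2 \<in> M \<and> a3 \<in> M"
        then obtain M where M: "M \<in> Ls" "a1 \<in> M" "a2 \<in> M" "a3 \<in> M"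
          unfolding compl_lines_def by blast
        have "M = N3" using uniq[OF pls M(1) N3(1) M(2) M(3) N3(2) N3(3) a(4)] .
        moreover have "M = N1" using uniq[OF pls M(1) N1(1) M(3) M(4) N1(2) N1(3) a(5)] .
        ultimately have "N1 \<subseteq> H" using hsub[OF hyp N1(1) N1(4), of q3] N3(4) qH by simp
        then show False using nH by simp
      qed
      have c12: "collinear (compl_lines Ls H) a1 a2" unfolding collinear_def
        by (rule bexI[OF _ inC(3)]) (use N3 a in simp)
      have c23: "collinear (compl_lines Ls H) a2 a3" unfolding collinear_def
        by (rule bexI[OF _ inC(1)]) (use N1 a in simp)
      have c13: "collinear (compl_lines Ls H) a1 a3" unfolding collinear_def
        by (rule bexI[OF _ inC(2)]) (use N2 a in simp)
      have tri: "triangle (compl_lines Ls H) a1 a2 a3"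
        unfolding triangle_def using a(4-6) c12 c23 c13 noline by simp
      have hp: "hpar H N1 L1" "hpar H N2 L2" "hpar H N3 L3"
        using hparI[OF N1(1) nH(1)] hparI[OF N2(1) nH(2)] hparI[OF N3(1) nH(3)] N1 N2 N3 qH
        unfolding q1_def q2_def q3_def by auto
      show "\<exists>a1 a2 a3 K1 K2 K3.
            a1 \<in> S - H \<and> a2 \<in> S - H \<and> a3 \<in> S - H \<and>
            triangle (compl_lines Ls H) a1 a2 a3 \<and>
            K1 \<in> Ls \<and> K2 \<in> Ls \<and> K3 \<in> Ls \<and>
            \<not> K1 \<subseteq> H \<and> \<not> K2 \<subseteq> H \<and> \<not> K3 \<subseteq> H \<and>
            a2 \<in> K1 - H \<and> a3 \<in> K1 - H \<and>
            a1 \<in> K2 - H \<and> a3 \<in> K2 - H \<and>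
            a1 \<in> K3 - H \<and> a2 \<in> K3 - H \<and>
            hpar H K1 L1 \<and> hpar H K2 L2 \<and> hpar H K3 L3"
        apply (rule exI[of _ a1], rule exI[of _ a2], rule exI[of _ a3])
        apply (rule exI[of _ N1], rule exI[of _ N2], rule exI[of _ N3])
        using a tri N1(1-3) N2(1-3) N3(1-3) nH hp by simp
    next
      assume "\<exists>a1 a2 a3 K1 K2 K3.
            a1 \<in> S - H \<and> a2 \<in> S - H \<and> a3 \<in> S - H \<and>
            triangle (compl_lines Ls H) a1 a2 a3 \<and>
            K1 \<in> Ls \<and> K2 \<in> Ls \<and> K3 \<in> Ls \<and>
            \<not> K1 \<subseteq> H \<and> \<not> K2 \<subseteq> H \<and> \<not> K3 \<subseteq> H \<and>
            a2 \<in> K1 - H \<and> a3 \<in> K1 - H \<and>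
            a1 \<in> K2 - H \<and> a3 \<in> K2 - H \<and>
            a1 \<in> K3 - H \<and> a2 \<in> K3 - H \<and>
            hpar H K1 L1 \<and> hpar H K2 L2 \<and> hpar H K3 L3"
      then obtain a1 a2 a3 K1 K2 K3 where a: "a1\<in>S-H" "a2\<in>S-H" "a3\<in>S-H"
        and tri: "triangle (compl_lines Ls H) a1 a2 a3"
        and K: "K1 \<in> Ls" "K2 \<in> Ls" "K3 \<in> Ls" "\<not> K1 \<subseteq> H" "\<not> K2 \<subseteq> H" "\<not> K3 \<subseteq> H"
        and m: "a2 \<in> K1" "a3 \<in> K1" "a1 \<in> K2" "a3 \<in> K2" "a1 \<in> K3" "a2 \<in> K3"
        and h: "hpar H K1 L1" "hpar H K2 L2" "hpar H K3 L3" by blast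
      have d: "a1\<noteq>a2" "a2\<noteq>a3" "a1\<noteq>a3" using tri unfolding triangle_def by auto
      have qK: "q1 \<in> K1" "q2 \<in> K2" "q3 \<in> K3"
        using hparD[OF K(1) K(4) h(1)] hparD[OF K(2) K(5) h(2)] hparD[OF K(3) K(6) h(3)]
        unfolding q1_def q2_def q3_def by auto
      show "\<exists>L\<in>Ls. q1 \<in> L \<and> q2 \<in> L \<and> q3 \<in> L"
        by (rule bwd[OF gamma veb hyp qH a d K(1) m(1) m(2) qK(1) K(2) m(3) m(4) qK(2) K(3) m(5) m(6) qK(3)])
    qed
  qed
  show ?thesis
    apply (intro conjI allI impI)
     apply (elim conjE)
     apply (rule P1; assumption)
    apply (elim conjE)
    apply (rule P2; assumption)
    done
qed

end
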